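(* Let $(S,d)$ be a complete metric space with a Hausdorff topology $\sigma$ compatible with $d$, and let $\phi,\phi_\epsilon:S\to(-\infty,+\infty]$ ($\epsilon>0$) have nonempty effective domains. Suppose there exist $A,B>0$, $u_\star\in S$ with $\phi_\epsilon(\cdot)\ge-A-Bd^2(\cdot,u_\star)$ for all $\epsilon>0$; that each $\phi_\epsilon$ satisfies (i) $\sup_{n,m}d(u_n,u_m)<+\infty$, $u_n\stackrel{\sigma}{\rightharpoonup}u$ $\Rightarrow$ $\liminf_n\phi_\epsilon(u_n)\ge\phi_\epsilon(u)$, and (ii) $\sup_{n,m}\{d(u_n,u_m),\phi_\epsilon(u_n)\}<+\infty$ $\Rightarrow$ some subsequence of $(u_n)$ $\sigma$-converges in $S$; and that the local slopes satisfy: whenever $\epsilon_n\to0$ and $u_n\stackrel{\sigma}{\rightharpoonup}u$, $\liminf_n|\partial\phi_{\epsilon_n}|(u_n)\ge|\partial\phi|(u)$. Then for every choice $\epsilon(\tau)>0$ with $\epsilon(\tau)\to0$ as $\tau\to0$: for all $u,u_\tau\in S$ with $u_\tau\stackrel{\sigma}{\rightharpoonup}u$ and $\sup_\tau\{\phi_{\epsilon(\tau)}(u_\tau),d(u_\tau,u)\}<+\infty$, $$\liminf_{\tau\to0}\frac{\phi_{\epsilon(\tau)}(u_\tau)-\mathcal{Y}_\tau\phi_{\epsilon(\tau)}(u_\tau)}{\tau}\ge\frac12|\partial^-\phi|^2(u).$$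
   Context: $\sigma$ compatible with $d$: if $u_n\stackrel{\sigma}{\rightharpoonup}u$, $v_n\stackrel{\sigma}{\rightharpoonup}v$ then $\liminf_n d(u_n,v_n)\ge d(u,v)$; if $d(u_n,v_n)\to0$ and $u_n\stackrel{\sigma}{\rightharpoonup}u$ then $v_n\stackrel{\sigma}{\rightharpoonup}u$. Local slope $|\partial f|(v)=\limsup_{w\stackrel{d}{\to}v}\frac{(f(v)-f(w))^+}{d(v,w)}$ for $f(v)<\infty$; relaxed slope $|\partial^-f|(u)=\inf\{\liminf_n|\partial f|(u_n): u_n\stackrel{\sigma}{\rightharpoonup}u,\ \sup_n\{d(u_n,u),f(u_n)\}<+\infty\}$; $\mathcal{Y}_\tau f(u)=\inf_{v\in S}\{f(v)+\frac1{2\tau}d^2(v,u)\}$. *)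

theory Defs
  imports "HOL-Analysis.Analysis"
begin

text \<open>Local slope of f at v w.r.t. the metric d on S.  Conventions: the slope is
  +\<infinity> outside the effective domain (f v = \<infinity>), and 0 at isolated points.\<close>
definition local_slope :: "'a set \<Rightarrow> ('a \<Rightarrow> 'a \<Rightarrow> real) \<Rightarrow> ('a \<Rightarrow> ereal) \<Rightarrow> 'a \<Rightarrow> ereal" where
  "local_slope S d f v =
     (if f v = \<infinity> then \<infinity>
      else max 0 (Limsup (atin (Metric_space.mtopology S d) v)
                    (\<lambda>w. max 0 (f v - f w) / ereal (d v w))))"

definition relaxed_slope :: "'a set \<Rightarrow> ('a \<Rightarrow> 'a \<Rightarrow> real) \<Rightarrow> 'a topology \<Rightarrow> ('a \<Rightarrow> ereal) \<Rightarrow> 'a \<Rightarrow> ereal" where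
  "relaxed_slope S d \<sigma> f u =
     (INF un \<in> {un :: nat \<Rightarrow> 'a. range un \<subseteq> S \<and> limitin \<sigma> un u sequentially \<and>
                  (\<exists>C::real. \<forall>n. d (un n) u \<le> C \<and> f (un n) \<le> ereal C)}.
        Liminf sequentially (\<lambda>n. local_slope S d f (un n)))"

definition yosida :: "'a set \<Rightarrow> ('a \<Rightarrow> 'a \<Rightarrow> real) \<Rightarrow> real \<Rightarrow> ('a \<Rightarrow> ereal) \<Rightarrow> 'a \<Rightarrow> ereal" where
  "yosida S d \<tau> f u = (INF v \<in> S. f v + ereal ((d v u)\<^sup>2 / (2 * \<tau>)))"

definition compatible :: "'a set \<Rightarrow> ('a \<Rightarrow> 'a \<Rightarrow> real) \<Rightarrow> 'a topology \<Rightarrow> bool" where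
  "compatible S d \<sigma> \<longleftrightarrow>
     (\<forall>un vn u v. range un \<subseteq> S \<and> range vn \<subseteq> S \<and> u \<in> S \<and> v \<in> S \<and>
         limitin \<sigma> un u sequentially \<and> limitin \<sigma> vn v sequentially \<longrightarrow>
         Liminf sequentially (\<lambda>n. ereal (d (un n) (vn n))) \<ge> ereal (d u v)) \<and>
     (\<forall>un vn u. range un \<subseteq> S \<and> range vn \<subseteq> S \<and> u \<in> S \<and>
         (\<lambda>n. d (un n) (vn n)) \<longlonglongrightarrow> 0 \<and> limitin \<sigma> un u sequentially \<longrightarrow>
         limitin \<sigma> vn u sequentially)"

end

theory Submission
  imports Defs
begin

lemma ereal_sq_mono: "0 \<le> (x::ereal) \<Longrightarrow> x \<le> y \<Longrightarrow> x^2 \<le> y^2"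
  by (cases x; cases y) (auto intro: mult_mono simp: power2_eq_square)

lemma lsnn: "local_slope S d f v \<ge> 0"
  unfolding local_slope_def by auto

locale core = Metric_space S d for S :: "'a set" and d :: "'a \<Rightarrow> 'a \<Rightarrow> real" +
  fixes \<sigma> :: "'a topology" and f :: "'a \<Rightarrow> ereal" and A B :: real and ustar :: 'a
  assumes top: "topspace \<sigma> = S" and compat: "compatible S d \<sigma>"
  and Bpos: "B > 0" and ustarS: "ustar \<in> S"
  and lower: "\<And>x. x\<in>S \<Longrightarrow> f x \<ge> ereal (- A - B * (d x ustar)\<^sup>2)"
  and lsc: "\<And>un u. range un \<subseteq> S \<Longrightarrow> u \<in> S \<Longrightarrow> (\<exists>C. \<forall>n m. d (un n) (un m) \<le> C) \<Longrightarrow>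
     limitin \<sigma> un u sequentially \<Longrightarrow> Liminf sequentially (\<lambda>n. f (un n)) \<ge> f u"
  and cpt: "\<And>un::nat\<Rightarrow>'a. range un \<subseteq> S \<Longrightarrow> (\<exists>C::real. \<forall>n m. d (un n) (un m) \<le> C \<and> f (un n) \<le> ereal C) \<Longrightarrow>
     \<exists>r u. strict_mono r \<and> u \<in> S \<and> limitin \<sigma> (un \<circ> r) u sequentially"
begin

lemma hlow:
  assumes v: "v\<in>S" and R: "d v ustar \<le> R" and tp: "0<\<tau>" "8*B*\<tau> \<le> 1" and x: "x\<in>S"
  shows "f x + ereal ((d x v)\<^sup>2/(2*\<tau>)) \<ge> ereal (-A - 2*B*R\<^sup>2 + (d x v)\<^sup>2/(4*\<tau>))"
proof -
  define a where "a = d x v"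
  have a0: "0 \<le> a" by (simp add: a_def)
  have tr: "d x ustar \<le> a + R" using triangle[OF x v ustarS] R a_def by linarith
  have R0: "0 \<le> R" using R nonneg[of v ustar] by linarith
  have "(d x ustar)\<^sup>2 \<le> (a + R)\<^sup>2" using tr nonneg[of x ustar] by (simp add: power_mono)
  also have "\<dots> \<le> 2*a\<^sup>2 + 2*R\<^sup>2" 
  proof -
    have "0 \<le> (a-R)\<^sup>2" by simp
    thus ?thesis by (simp add: power2_eq_square algebra_simps)
  qed
  finally have sq: "(d x ustar)\<^sup>2 \<le> 2*a\<^sup>2 + 2*R\<^sup>2" .
  have bb: "B * (d x ustar)\<^sup>2 \<le> B*(2*a\<^sup>2 + 2*R\<^sup>2)" using sq Bpos by (simp add: mult_left_mono)
  have k: "2*B*a\<^sup>2 \<le> a\<^sup>2/(4*\<tau>)"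
  proof -
    have "2*B*a\<^sup>2 * (4*\<tau>) = (8*B*\<tau>) * a\<^sup>2" by simp
    also have "\<dots> \<le> a\<^sup>2" using tp Bpos by (intro mult_left_le_one_le) auto
    finally show ?thesis using tp by (simp add: field_simps)
  qed
  have "a\<^sup>2/(2*\<tau>) = a\<^sup>2/(4*\<tau>) + a\<^sup>2/(4*\<tau>)" using tp by (simp add: field_simps)
  hence "-A - 2*B*R\<^sup>2 + a\<^sup>2/(4*\<tau>) \<le> (- A - B * (d x ustar)\<^sup>2) + a\<^sup>2/(2*\<tau>)"
    using k bb by (simp add: algebra_simps)
  also have "ereal \<dots> \<le> f x + ereal (a\<^sup>2/(2*\<tau>))"
    using lower[OF x] by (metis add_right_mono plus_ereal.simps(1))
  finally show ?thesis by (simp add: a_def)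
qed

lemma exists_min:
  assumes v: "v\<in>S" and fv: "f v \<le> ereal C" and R: "d v ustar \<le> R" and tp: "0<\<tau>" "8*B*\<tau> \<le> 1"
  shows "\<exists>w\<in>S. (\<forall>x\<in>S. f w + ereal ((d w v)\<^sup>2/(2*\<tau>)) \<le> f x + ereal ((d x v)\<^sup>2/(2*\<tau>)))
           \<and> f w \<noteq> \<infinity> \<and> (d w v)\<^sup>2 \<le> 4*\<tau>*(C + A + 2*B*R\<^sup>2)"
proof -
  define h where "h x = f x + ereal ((d x v)\<^sup>2/(2*\<tau>))" for x
  define Y where "Y = (INF x\<in>S. h x)"
  have hv: "h v = f v" using v by (simp add: h_def)
  have hl: "ereal (-A - 2*B*R\<^sup>2 + (d x v)\<^sup>2/(4*\<tau>)) \<le> h x" if "x\<in>S" for x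
    using hlow[OF v R tp that] by (simp add: h_def)
  have hl0: "ereal (-A - 2*B*R\<^sup>2) \<le> h x" if "x\<in>S" for x
  proof -
    have "0 \<le> (d x v)\<^sup>2/(4*\<tau>)" using tp by simp
    hence "ereal (-A - 2*B*R\<^sup>2) \<le> ereal (-A - 2*B*R\<^sup>2 + (d x v)\<^sup>2/(4*\<tau>))" by simp
    thus ?thesis using hl[OF that] by (rule order_trans)
  qed
  have Ylow: "ereal (-A - 2*B*R\<^sup>2) \<le> Y" unfolding Y_def using hl0 by (rule INF_greatest)
  have Yup: "Y \<le> ereal C" unfolding Y_def using INF_lower[OF v, of h] hv fv by simp
  obtain y where Yy: "Y = ereal y" using Ylow Yup by (cases Y) auto
  have "\<exists>z\<in>S. h z < ereal (y + 1/Suc j)" for j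
  proof -
    have "Y < ereal (y + 1/Suc j)" using Yy by simp
    thus ?thesis unfolding Y_def by (simp add: INF_less_iff)
  qed
  then obtain z where zS: "\<And>j. z j \<in> S" and zlt: "\<And>j. h (z j) < ereal (y + 1/Suc j)" by metis
  have zge: "ereal y \<le> h (z j)" for j unfolding Yy[symmetric] Y_def using zS by (rule INF_lower)
  define fr where "fr j = real_of_ereal (f (z j))" for j
  define a where "a j = (d (z j) v)\<^sup>2/(2*\<tau>)" for j
  have a0: "0 \<le> a j" for j using tp by (simp add: a_def)
  have ffin: "f (z j) = ereal (fr j)" for j
  proof -
    have "f (z j) \<noteq> -\<infinity>" using lower[OF zS[of j]] by auto
    moreover have "f (z j) \<noteq> \<infinity>" using zlt[of j] by (auto simp: h_def)
    ultimately show ?thesis unfolding fr_def by (cases "f (z j)") auto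
  qed
  have hz: "h (z j) = ereal (fr j + a j)" for j by (simp add: h_def ffin a_def)
  have b1: "y \<le> fr j + a j" "fr j + a j < y + 1/Suc j" for j using zge[of j] zlt[of j] hz[of j] by auto
  have one_le: "1/real (Suc j) \<le> 1" for j by simp
  define D2 where "D2 = 4*\<tau>*(y+1+A+2*B*R\<^sup>2)"
  have dz: "(d (z j) v)\<^sup>2 \<le> D2" for j
  proof -
    have "-A - 2*B*R\<^sup>2 + (d (z j) v)\<^sup>2/(4*\<tau>) \<le> fr j + a j" using hl[OF zS[of j]] hz[of j] by simp
    also have "\<dots> < y + 1" using b1(2)[of j] one_le[of j] by linarith
    finally have "(d (z j) v)\<^sup>2/(4*\<tau>) \<le> y+1+A+2*B*R\<^sup>2" by simp
    thus ?thesis using tp by (simp add: D2_def field_simps)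
  qed
  have dz': "d (z j) v \<le> sqrt D2" for j using dz[of j] by (simp add: real_le_rsqrt)
  have frb: "fr j \<le> y + 1" for j using b1(2)[of j] a0[of j] one_le[of j] by linarith
  have "bounded (range (\<lambda>j. d (z j) v))" unfolding bounded_real using dz' by auto
  then obtain \<delta> r1 where r1: "strict_mono r1" and dl: "((\<lambda>j. d (z j) v) \<circ> r1) \<longlonglongrightarrow> \<delta>"
    using bounded_imp_convergent_subsequence by blast
  have "\<exists>r w. strict_mono r \<and> w \<in> S \<and> limitin \<sigma> ((z \<circ> r1) \<circ> r) w sequentially"
  proof (rule cpt)
    show "range (z \<circ> r1) \<subseteq> S" using zS by auto
    show "\<exists>C::real. \<forall>n m. d ((z \<circ> r1) n) ((z \<circ> r1) m) \<le> C \<and> f ((z \<circ> r1) n) \<le> ereal C"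
    proof (intro exI allI)
      fix n m
      have "d (z (r1 n)) (z (r1 m)) \<le> d (z (r1 n)) v + d v (z (r1 m))" using triangle zS v by blast
      also have "\<dots> \<le> 2 * sqrt D2" using dz'[of "r1 n"] dz'[of "r1 m"] commute[of v "z (r1 m)"] by linarith
      finally show "d ((z \<circ> r1) n) ((z \<circ> r1) m) \<le> max (2 * sqrt D2) (y+1) \<and> f ((z \<circ> r1) n) \<le> ereal (max (2 * sqrt D2) (y+1))"
        using frb[of "r1 n"] ffin[of "r1 n"] by (auto simp: le_max_iff_disj)
    qed
  qed
  then obtain r2 w where r2: "strict_mono r2" and wS: "w \<in> S" and wl: "limitin \<sigma> ((z \<circ> r1) \<circ> r2) w sequentially"
    by blast
  define rr where "rr = r1 \<circ> r2"
  have rr: "strict_mono rr" unfolding rr_def using r1 r2 by (rule strict_mono_o)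
  have ddl: "(\<lambda>j. d (z (rr j)) v) \<longlonglongrightarrow> \<delta>" using LIMSEQ_subseq_LIMSEQ[OF dl r2] by (simp add: rr_def o_def)
  have hl2: "(\<lambda>j. fr (rr j) + a (rr j)) \<longlonglongrightarrow> y"
  proof (rule tendsto_sandwich[where f="\<lambda>_. y" and h="\<lambda>j. y + inverse (real (Suc j))"])
    show "\<forall>\<^sub>F j in sequentially. y \<le> fr (rr j) + a (rr j)" using b1(1) by simp
    show "\<forall>\<^sub>F j in sequentially. fr (rr j) + a (rr j) \<le> y + inverse (real (Suc j))"
    proof (intro always_eventually allI)
      fix j
      have "j \<le> rr j" using rr by (rule seq_suble)
      hence "1/real (Suc (rr j)) \<le> 1/ real (Suc j)" by (simp add: frac_le)
      thus "fr (rr j) + a (rr j) \<le> y + inverse (real (Suc j))" using b1(2)[of "rr j"] by (simp add: inverse_eq_divide)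
    qed
    show "(\<lambda>_. y) \<longlonglongrightarrow> y" by simp
    show "(\<lambda>j. y + inverse (real (Suc j))) \<longlonglongrightarrow> y"
      using tendsto_add[OF tendsto_const LIMSEQ_inverse_real_of_nat, of y] by simp
  qed
  have al: "(\<lambda>j. a (rr j)) \<longlonglongrightarrow> \<delta>\<^sup>2/(2*\<tau>)" unfolding a_def using tp by (intro tendsto_intros ddl) auto
  have frl: "(\<lambda>j. fr (rr j)) \<longlonglongrightarrow> y - \<delta>\<^sup>2/(2*\<tau>)" using tendsto_diff[OF hl2 al] by simp
  have LI: "Liminf sequentially (\<lambda>j. f (z (rr j))) = ereal (y - \<delta>\<^sup>2/(2*\<tau>))"
    unfolding ffin by (intro lim_imp_Liminf tendsto_ereal frl) simp
  have fw: "f w \<le> ereal (y - \<delta>\<^sup>2/(2*\<tau>))"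
  proof -
    have "f w \<le> Liminf sequentially (\<lambda>n. f ((z \<circ> rr) n))"
    proof (rule lsc)
      show "range (z \<circ> rr) \<subseteq> S" using zS by auto
      show "w \<in> S" by fact
      show "limitin \<sigma> (z \<circ> rr) w sequentially" using wl by (simp add: rr_def o_assoc)
      show "\<exists>C. \<forall>n m. d ((z \<circ> rr) n) ((z \<circ> rr) m) \<le> C"
      proof (intro exI allI)
        fix n m
        have "d (z (rr n)) (z (rr m)) \<le> d (z (rr n)) v + d v (z (rr m))" using triangle zS v by blast
        also have "\<dots> \<le> 2 * sqrt D2" using dz'[of "rr n"] dz'[of "rr m"] commute[of v "z (rr m)"] by linarith
        finally show "d ((z \<circ> rr) n) ((z \<circ> rr) m) \<le> 2 * sqrt D2" by simp
      qed
    qed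
    thus ?thesis using LI by (simp add: o_def)
  qed
  have dw: "d w v \<le> \<delta>"
  proof -
    have "ereal (d w v) \<le> Liminf sequentially (\<lambda>n. ereal (d ((z \<circ> rr) n) ((\<lambda>_. v) n)))"
      using compat unfolding compatible_def
      apply (elim conjE)
      apply (erule allE[of _ "z \<circ> rr"], erule allE[of _ "\<lambda>_. v"], erule allE[of _ w], erule allE[of _ v])
      using zS v wS wl top by (auto simp: rr_def o_assoc)
    also have "\<dots> = ereal \<delta>" by (simp add: o_def) (intro lim_imp_Liminf tendsto_ereal ddl, simp_all)
    finally show ?thesis by simp
  qed
  have hw: "h w \<le> ereal y"
  proof -
    have "(d w v)\<^sup>2 \<le> \<delta>\<^sup>2" using dw by (simp add: power_mono)
    hence "(y - \<delta>\<^sup>2/(2*\<tau>)) + (d w v)\<^sup>2/(2*\<tau>) \<le> y" using tp by (simp add: divide_right_mono)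
    moreover have "h w \<le> ereal (y - \<delta>\<^sup>2/(2*\<tau>)) + ereal ((d w v)\<^sup>2/(2*\<tau>))"
      unfolding h_def using fw by (rule add_right_mono)
    ultimately show ?thesis by (metis order_trans plus_ereal.simps(1) ereal_less_eq(3))
  qed
  have hmin: "h w \<le> h x" if "x\<in>S" for x
    using hw Yy INF_lower[OF that, of h] unfolding Y_def by auto
  have fwfin: "f w \<noteq> \<infinity>" using hw by (auto simp: h_def)
  have "ereal (-A - 2*B*R\<^sup>2 + (d w v)\<^sup>2/(4*\<tau>)) \<le> ereal C"
    using hl[OF wS] hmin[OF v] hv fv by (metis order_trans)
  hence "(d w v)\<^sup>2/(4*\<tau>) \<le> C + A + 2*B*R\<^sup>2" by simp
  hence "(d w v)\<^sup>2 \<le> 4*\<tau>*(C + A + 2*B*R\<^sup>2)" using tp by (simp add: field_simps)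
  thus ?thesis using wS hmin fwfin unfolding h_def by blast
qed

lemma slope_bound:
  assumes v: "v\<in>S" and w: "w\<in>S" and tp: "0<\<tau>" and fw: "f w \<noteq> \<infinity>"
    and mn: "\<forall>x\<in>S. f w + ereal ((d w v)\<^sup>2/(2*\<tau>)) \<le> f x + ereal ((d x v)\<^sup>2/(2*\<tau>))"
  shows "local_slope S d f w \<le> ereal (d w v/\<tau>)"
proof -
  obtain fw' where fw': "f w = ereal fw'" using fw lower[OF w] by (cases "f w") auto
  define dw where "dw = d w v"
  have dw0: "0 \<le> dw" by (simp add: dw_def)
  have L: "Limsup (atin mtopology w) (\<lambda>x. max 0 (f w - f x) / ereal (d w x)) \<le> ereal (dw/\<tau>)"
  proof (rule ereal_le_epsilon2)
    fix e :: real assume e: "0 < e"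
    define \<eta> where "\<eta> = 2*\<tau>*e"
    have \<eta>: "0 < \<eta>" using e tp by (simp add: \<eta>_def)
    show "Limsup (atin mtopology w) (\<lambda>x. max 0 (f w - f x) / ereal (d w x)) \<le> ereal (dw/\<tau>) + ereal e"
    proof (rule Limsup_bounded)
      show "\<forall>\<^sub>F x in atin mtopology w. max 0 (f w - f x) / ereal (d w x) \<le> ereal (dw/\<tau>) + ereal e"
        unfolding eventually_atin
      proof (intro disjI2 exI conjI ballI)
        show "openin mtopology (mball w \<eta>)" by simp
        show "w \<in> mball w \<eta>" using w \<eta> by simp
        fix x assume "x \<in> mball w \<eta> - {w}"
        hence x: "x \<in> S" and dx: "d w x < \<eta>" and xw: "x \<noteq> w" by auto
        have dpos: "0 < d w x" using x w xw zero[OF w x] nonneg[of w x] by (metis order_less_le)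
        show "max 0 (f w - f x) / ereal (d w x) \<le> ereal (dw/\<tau>) + ereal e"
        proof (cases "f x = \<infinity>")
          case True
          thus ?thesis using fw' dw0 tp e by simp
        next
          case False
          then obtain fx where fx: "f x = ereal fx" using lower[OF x] by (cases "f x") auto
          define dx where "dx = d x v"
          have "ereal (fw' + dw\<^sup>2/(2*\<tau>)) \<le> ereal (fx + dx\<^sup>2/(2*\<tau>))"
            using mn x fw' fx by (auto simp: dw_def dx_def)
          hence m1: "fw' - fx \<le> (dx\<^sup>2 - dw\<^sup>2)/(2*\<tau>)" by (simp add: diff_divide_distrib)
          have t1: "dx \<le> dw + d w x" using triangle[OF x w v] commute[of x w] by (simp add: dx_def dw_def)
          have t2: "dx - dw \<le> d w x" using t1 by simp
          have dx0: "0 \<le> dx" by (simp add: dx_def)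
          have "dx\<^sup>2 - dw\<^sup>2 = (dx - dw)*(dx + dw)" by (simp add: power2_eq_square algebra_simps)
          also have "\<dots> \<le> d w x * (dx + dw)" using t2 dx0 dw0 by (simp add: mult_right_mono)
          also have "\<dots> \<le> d w x * (2*dw + \<eta>)" using t1 dx dpos by (intro mult_left_mono) auto
          finally have m2: "fw' - fx \<le> d w x * (2*dw + \<eta>)/(2*\<tau>)" using m1 tp
            by (smt (verit) divide_right_mono)
          have m3: "max 0 (fw' - fx) / d w x \<le> dw/\<tau> + e"
          proof -
            have "max 0 (fw' - fx) \<le> d w x * (2*dw + \<eta>)/(2*\<tau>)" using m2 dpos dw0 \<eta> tp by auto
            hence "max 0 (fw' - fx) / d w x \<le> (2*dw + \<eta>)/(2*\<tau>)" using dpos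
              by (simp add: divide_le_eq mult.commute)
            also have "\<dots> = dw/\<tau> + e" using tp by (simp add: \<eta>_def field_simps)
            finally show ?thesis .
          qed
          have "max 0 (f w - f x) / ereal (d w x) = ereal (max 0 (fw' - fx) / d w x)"
            using fw' fx dpos by (simp add: max_def)
          thus ?thesis using m3 by simp
        qed
      qed
    qed
  qed
  show ?thesis unfolding local_slope_def using fw L dw0 tp by (simp add: dw_def)
qed

lemma min_val:
  assumes w: "w\<in>S" and mn: "\<forall>x\<in>S. f w + ereal ((d w v)\<^sup>2/(2*\<tau>)) \<le> f x + ereal ((d x v)\<^sup>2/(2*\<tau>))"
  shows "yosida S d \<tau> f v = f w + ereal ((d w v)\<^sup>2/(2*\<tau>))"
  unfolding yosida_def
  by (rule antisym) (auto intro!: INF_lower2[OF w] INF_greatest simp: mn)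

lemma core_est:
  assumes v: "v\<in>S" and fv: "f v \<le> ereal C" and R: "d v ustar \<le> R" and tp: "0<\<tau>" "8*B*\<tau> \<le> 1"
    and th: "0<\<theta>" "\<theta><1" "\<theta>^K \<le> 1-\<theta>" and K: "0<K"
  shows "\<exists>w\<in>S. \<exists>\<rho> y0 fv'. f v = ereal fv' \<and> yosida S d \<tau> f v = ereal y0 \<and> 0 \<le> \<rho> \<and>
           local_slope S d f w \<le> ereal \<rho> \<and> (d w v)\<^sup>2 \<le> 4*\<tau>*(C + A + 2*B*R\<^sup>2) \<and>
           \<rho>\<^sup>2/2 * (\<tau>*\<theta>\<^sup>2) \<le> fv' - y0"
proof -
  define MN where "MN r w \<longleftrightarrow> w\<in>S \<and> (\<forall>x\<in>S. f w + ereal ((d w v)\<^sup>2/(2*r)) \<le> f x + ereal ((d x v)\<^sup>2/(2*r)))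
           \<and> f w \<noteq> \<infinity> \<and> (d w v)\<^sup>2 \<le> 4*r*(C + A + 2*B*R\<^sup>2)" for r w
  have ex: "\<exists>w. MN r w" if "0 < r" "r \<le> \<tau>" for r
  proof -
    have "8*B*r \<le> 8*B*\<tau>" using that Bpos by simp
    thus ?thesis using exists_min[OF v fv R \<open>0<r\<close>] tp unfolding MN_def by auto
  qed
  define t where "t k = \<tau> * \<theta>^k" for k
  have tpos: "0 < t k" for k using tp th by (simp add: t_def)
  have tle: "t k \<le> \<tau>" for k using tp th by (simp add: t_def power_le_one mult_left_le)
  have tS: "t (Suc k) = \<theta> * t k" for k by (simp add: t_def)
  have "\<forall>k. \<exists>w. MN (t (Suc k)) w" using ex tpos tle by blast
  then obtain W where W: "\<And>k. MN (t (Suc k)) (W k)" by (metis choice)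
  have "\<forall>k. \<exists>w. MN (t k) w" using ex tpos tle by blast
  then obtain M where M: "\<And>k. MN (t k) (M k)" by (metis choice)
  have fin: "\<exists>a. f w = ereal a" if "MN r w" for r w
    using that lower[of w] unfolding MN_def by (cases "f w") auto
  have yfin: "\<exists>y. yosida S d (t k) f v = ereal y" for k
  proof -
    obtain a where "f (M k) = ereal a" using fin[OF M] by blast
    thus ?thesis using min_val[of "M k" v "t k"] M[of k] unfolding MN_def by auto
  qed
  define y where "y k = real_of_ereal (yosida S d (t k) f v)" for k
  have Yy: "yosida S d (t k) f v = ereal (y k)" for k using yfin[of k] by (auto simp: y_def)
  have Yfv: "yosida S d r f v \<le> f v" for r
    unfolding yosida_def using INF_lower2[OF v, of _ "f v"] v by simp
  obtain fv' where fv': "f v = ereal fv'" using fv lower[OF v] by (cases "f v") auto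
  have yle: "y k \<le> fv'" for k using Yfv[of "t k"] Yy[of k] fv' by simp
  define q where "q k = (d (W k) v / t (Suc k))\<^sup>2 / 2" for k
  have step: "y (Suc k) - y k \<ge> (t k - t (Suc k)) * \<theta> * q k" for k
  proof -
    obtain a where a: "f (W k) = ereal a" using fin[OF W] by blast
    define dd where "dd = d (W k) v"
    have e1: "y (Suc k) = a + dd\<^sup>2/(2*t (Suc k))"
      using min_val[of "W k" v "t (Suc k)"] W[of k] Yy[of "Suc k"] a unfolding MN_def dd_def by auto
    have e2: "y k \<le> a + dd\<^sup>2/(2*t k)"
    proof -
      have "yosida S d (t k) f v \<le> f (W k) + ereal ((d (W k) v)\<^sup>2/(2*t k))"
        unfolding yosida_def using W[of k] unfolding MN_def by (auto intro: INF_lower2)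
      thus ?thesis using Yy[of k] a by (simp add: dd_def)
    qed
    have "(t k - t (Suc k)) * \<theta> * q k = dd\<^sup>2/(2*t (Suc k)) - dd\<^sup>2/(2*t k)"
      using tpos[of k] th unfolding q_def tS dd_def[symmetric]
      by (simp add: field_simps power2_eq_square)
    thus ?thesis using e1 e2 by linarith
  qed
  define Q where "Q = (fv' - y 0)/(\<tau>*\<theta>\<^sup>2)"
  have Q0: "0 \<le> Q" using yle[of 0] tp th by (simp add: Q_def)
  have "\<exists>k<K. q k \<le> Q"
  proof (rule ccontr)
    assume "\<not> ?thesis"
    hence qb: "\<And>k. k<K \<Longrightarrow> Q < q k" by force
    have "(\<Sum>k<K. (t k - t (Suc k)) * \<theta> * Q) < (\<Sum>k<K. (t k - t (Suc k)) * \<theta> * q k)"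
    proof (rule sum_strict_mono)
      fix k assume "k \<in> {..<K}"
      hence "Q < q k" using qb by simp
      moreover have "0 < (t k - t (Suc k)) * \<theta>" using tpos[of k] th by (simp add: tS algebra_simps)
      ultimately show "(t k - t (Suc k)) * \<theta> * Q < (t k - t (Suc k)) * \<theta> * q k" by (rule mult_strict_left_mono)
    qed (use K in auto)
    also have "\<dots> \<le> (\<Sum>k<K. y (Suc k) - y k)" by (rule sum_mono) (use step in auto)
    also have "\<dots> = y K - y 0" by (rule sum_lessThan_telescope)
    also have "\<dots> \<le> fv' - y 0" using yle[of K] by simp
    finally have c1: "(\<Sum>k<K. (t k - t (Suc k)) * \<theta> * Q) < fv' - y 0" .
    have "(\<Sum>k<K. (t k - t (Suc k)) * \<theta> * Q) = (\<Sum>k<K. t k - t (Suc k)) * (\<theta> * Q)"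
      by (simp add: sum_distrib_right mult.assoc)
    also have "(\<Sum>k<K. t k - t (Suc k)) = t 0 - t K" by (rule sum_lessThan_telescope')
    also have "t 0 - t K = \<tau> * (1 - \<theta>^K)" by (simp add: t_def algebra_simps)
    finally have c2: "(\<Sum>k<K. (t k - t (Suc k)) * \<theta> * Q) = \<tau> * (1 - \<theta>^K) * (\<theta> * Q)" .
    have "\<tau> * \<theta> * (\<theta> * Q) \<le> \<tau> * (1 - \<theta>^K) * (\<theta> * Q)"
      using th tp Q0 by (intro mult_right_mono mult_left_mono) auto
    moreover have "\<tau> * \<theta> * (\<theta> * Q) = fv' - y 0" using tp th by (simp add: Q_def power2_eq_square)
    ultimately show False using c1 c2 by linarith
  qed
  then obtain k where kK: "k<K" and qk: "q k \<le> Q" by blast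
  define \<rho> where "\<rho> = d (W k) v / t (Suc k)"
  have \<rho>0: "0 \<le> \<rho>" using tpos[of "Suc k"] by (simp add: \<rho>_def)
  have ls: "local_slope S d f (W k) \<le> ereal \<rho>"
    unfolding \<rho>_def using W[of k] tpos[of "Suc k"] slope_bound[OF v, of "W k" "t (Suc k)"] unfolding MN_def by auto
  have Cp: "0 \<le> C + A + 2*B*R\<^sup>2"
  proof -
    have "0 \<le> (d (W k) v)\<^sup>2" by simp
    also have "\<dots> \<le> 4*t (Suc k)*(C + A + 2*B*R\<^sup>2)" using W[of k] by (simp add: MN_def)
    finally show ?thesis using tpos[of "Suc k"] by (simp add: zero_le_mult_iff)
  qed
  have dist: "(d (W k) v)\<^sup>2 \<le> 4*\<tau>*(C + A + 2*B*R\<^sup>2)"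
  proof -
    have "(d (W k) v)\<^sup>2 \<le> 4*t (Suc k)*(C + A + 2*B*R\<^sup>2)" using W[of k] by (simp add: MN_def)
    also have "\<dots> \<le> 4*\<tau>*(C + A + 2*B*R\<^sup>2)" using tle[of "Suc k"] Cp by (intro mult_right_mono) auto
    finally show ?thesis .
  qed
  have "\<rho>\<^sup>2/2 * (\<tau>*\<theta>\<^sup>2) \<le> Q * (\<tau>*\<theta>\<^sup>2)" using qk tp th unfolding q_def \<rho>_def[symmetric]
    by (intro mult_right_mono) auto
  also have "\<dots> = fv' - y 0" using tp th by (simp add: Q_def)
  finally have "\<rho>\<^sup>2/2 * (\<tau>*\<theta>\<^sup>2) \<le> fv' - y 0" .
  moreover have "yosida S d \<tau> f v = ereal (y 0)" using Yy[of 0] by (simp add: t_def)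
  ultimately show ?thesis using W[of k] \<rho>0 ls dist fv' unfolding MN_def by blast
qed

end

lemma limitin_comp: "limitin X f l F \<Longrightarrow> filterlim g F G \<Longrightarrow> limitin X (\<lambda>n. f (g n)) l G"
  unfolding limitin_def filterlim_iff by auto

lemma half_sq_le:
  assumes "0 \<le> x" "x \<le> ereal (sqrt (2*c))" "0 \<le> c"
  shows "ereal (1/2) * x\<^sup>2 \<le> ereal c"
proof -
  obtain a where a: "x = ereal a" using assms by (cases x) auto
  have "0 \<le> a" "a \<le> sqrt (2*c)" using assms a by auto
  hence "a\<^sup>2 \<le> 2*c" using assms(3) by (metis real_sqrt_le_iff real_sqrt_pow2_iff real_sqrt_power
      abs_of_nonneg real_sqrt_abs power2_eq_square mult_nonneg_nonneg real_sqrt_ge_zero zero_le_numeral power_mono)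
  thus ?thesis using a by simp
qed

theorem proposition5p2:
  fixes S :: "'a set" and d :: "'a \<Rightarrow> 'a \<Rightarrow> real" and \<sigma> :: "'a topology"
    and \<phi> :: "'a \<Rightarrow> ereal" and \<phi>\<epsilon> :: "real \<Rightarrow> 'a \<Rightarrow> ereal"
    and A B :: real and ustar :: 'a and \<epsilon> :: "real \<Rightarrow> real"
  assumes metric: "Metric_space S d"
    and complete: "Metric_space.mcomplete S d"
    and top: "topspace \<sigma> = S"
    and haus: "Hausdorff_space \<sigma>"
    and compat: "compatible S d \<sigma>"
    and phi_proper: "\<forall>x\<in>S. \<phi> x \<noteq> -\<infinity>" "\<exists>x\<in>S. \<phi> x \<noteq> \<infinity>"
    and phie_proper: "\<forall>e>0. (\<forall>x\<in>S. \<phi>\<epsilon> e x \<noteq> -\<infinity>) \<and> (\<exists>x\<in>S. \<phi>\<epsilon> e x \<noteq> \<infinity>)"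
    and AB: "A > 0" "B > 0" "ustar \<in> S"
    and lower: "\<forall>e>0. \<forall>x\<in>S. \<phi>\<epsilon> e x \<ge> ereal (- A - B * (d x ustar)\<^sup>2)"
    and lsc: "\<forall>e>0. \<forall>un u. range un \<subseteq> S \<and> u \<in> S \<and>
                 (\<exists>C. \<forall>n m. d (un n) (un m) \<le> C) \<and> limitin \<sigma> un u sequentially \<longrightarrow>
                 Liminf sequentially (\<lambda>n. \<phi>\<epsilon> e (un n)) \<ge> \<phi>\<epsilon> e u"
    and cpt: "\<forall>e>0. \<forall>un :: nat \<Rightarrow> 'a. range un \<subseteq> S \<and>
                 (\<exists>C::real. \<forall>n m. d (un n) (un m) \<le> C \<and> \<phi>\<epsilon> e (un n) \<le> ereal C) \<longrightarrow>
                 (\<exists>r u. strict_mono r \<and> u \<in> S \<and> limitin \<sigma> (un \<circ> r) u sequentially)"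
    and slope: "\<forall>en un u. (\<forall>n. en n > 0) \<and> en \<longlonglongrightarrow> 0 \<and> range un \<subseteq> S \<and> u \<in> S \<and>
                 limitin \<sigma> un u sequentially \<longrightarrow>
                 Liminf sequentially (\<lambda>n. local_slope S d (\<phi>\<epsilon> (en n)) (un n))
                   \<ge> local_slope S d \<phi> u"
    and eps_pos: "\<forall>\<tau>>0. \<epsilon> \<tau> > 0"
    and eps_lim: "(\<epsilon> \<longlongrightarrow> 0) (at_right 0)"
  shows "\<forall>u u\<tau>. u \<in> S \<and> (\<forall>\<tau>>0. u\<tau> \<tau> \<in> S) \<and> limitin \<sigma> u\<tau> u (at_right 0) \<and>
           (\<exists>C::real. \<forall>\<tau>>0. \<phi>\<epsilon> (\<epsilon> \<tau>) (u\<tau> \<tau>) \<le> ereal C \<and> d (u\<tau> \<tau>) u \<le> C) \<longrightarrow>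
           Liminf (at_right 0)
             (\<lambda>\<tau>. (\<phi>\<epsilon> (\<epsilon> \<tau>) (u\<tau> \<tau>) - yosida S d \<tau> (\<phi>\<epsilon> (\<epsilon> \<tau>)) (u\<tau> \<tau>)) / ereal \<tau>)
           \<ge> ereal (1/2) * (relaxed_slope S d \<sigma> \<phi> u)\<^sup>2"
  proof (intro allI impI)
  fix u and u\<tau> :: "real \<Rightarrow> 'a"
  assume H: "u \<in> S \<and> (\<forall>\<tau>>0. u\<tau> \<tau> \<in> S) \<and> limitin \<sigma> u\<tau> u (at_right 0) \<and>
           (\<exists>C::real. \<forall>\<tau>>0. \<phi>\<epsilon> (\<epsilon> \<tau>) (u\<tau> \<tau>) \<le> ereal C \<and> d (u\<tau> \<tau>) u \<le> C)"
  then have uS: "u \<in> S" and u\<tau>S: "\<And>\<tau>. \<tau>>0 \<Longrightarrow> u\<tau> \<tau> \<in> S" and ul: "limitin \<sigma> u\<tau> u (at_right 0)"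
    by auto
  from H obtain C0 where C0: "\<And>\<tau>. \<tau>>0 \<Longrightarrow> \<phi>\<epsilon> (\<epsilon> \<tau>) (u\<tau> \<tau>) \<le> ereal C0 \<and> d (u\<tau> \<tau>) u \<le> C0" by auto
  interpret M: Metric_space S d by (rule metric)
  have cn: "core S d \<sigma> (\<phi>\<epsilon> e) A B ustar" if "e > 0" for e
  proof (unfold_locales)
    show "topspace \<sigma> = S" "compatible S d \<sigma>" "0 < B" "ustar \<in> S" using top compat AB by auto
    show "\<And>x. x \<in> S \<Longrightarrow> ereal (- A - B * (d x ustar)\<^sup>2) \<le> \<phi>\<epsilon> e x" using lower that by auto
    show "\<And>un u. range un \<subseteq> S \<Longrightarrow> u \<in> S \<Longrightarrow> \<exists>C. \<forall>n m. d (un n) (un m) \<le> C \<Longrightarrow>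
      limitin \<sigma> un u sequentially \<Longrightarrow> \<phi>\<epsilon> e u \<le> Liminf sequentially (\<lambda>n. \<phi>\<epsilon> e (un n))"
      using lsc that by blast
    show "\<And>un::nat\<Rightarrow>'a. range un \<subseteq> S \<Longrightarrow> \<exists>C. \<forall>n m. d (un n) (un m) \<le> C \<and> \<phi>\<epsilon> e (un n) \<le> ereal C \<Longrightarrow>
      \<exists>r u. strict_mono r \<and> u \<in> S \<and> limitin \<sigma> (un \<circ> r) u sequentially"
      using cpt that by blast
  qed
  define G where "G \<tau> = (\<phi>\<epsilon> (\<epsilon> \<tau>) (u\<tau> \<tau>) - yosida S d \<tau> (\<phi>\<epsilon> (\<epsilon> \<tau>)) (u\<tau> \<tau>)) / ereal \<tau>" for \<tau>
  define ls where "ls = local_slope S d \<phi> u"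
  have ls0: "0 \<le> ls" unfolding ls_def by (rule lsnn)
  define R where "R = C0 + d u ustar"
  define MM where "MM = C0 + A + 2*B*R\<^sup>2"
  define \<tau>0 where "\<tau>0 = 1/(8*B)"
  have \<tau>00: "0 < \<tau>0" using AB by (simp add: \<tau>0_def)
  define \<theta> where "\<theta> n = 1 - 1/real (Suc (Suc n))" for n
  have \<theta>p: "0 < \<theta> n" "\<theta> n < 1" for n by (auto simp: \<theta>_def)
  have \<theta>l: "\<theta> \<longlonglongrightarrow> 1"
  proof -
    have "(\<lambda>n. inverse (real (Suc (Suc n)))) \<longlonglongrightarrow> 0" by (rule LIMSEQ_Suc[OF LIMSEQ_inverse_real_of_nat])
    hence "(\<lambda>n. 1 - inverse (real (Suc (Suc n)))) \<longlonglongrightarrow> 1 - 0" by (intro tendsto_intros)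
    moreover have "\<theta> = (\<lambda>n. 1 - inverse (real (Suc (Suc n))))" by (simp add: fun_eq_iff \<theta>_def inverse_eq_divide)
    ultimately show ?thesis by simp
  qed
  have main: "ereal (1/2) * ls\<^sup>2 \<le> Liminf (at_right 0) G"
    unfolding le_Liminf_iff
  proof (intro allI impI)
    fix y assume "y < ereal (1/2) * ls\<^sup>2"
    then obtain c where yc: "y < ereal c" and cl: "ereal c < ereal (1/2) * ls\<^sup>2" using ereal_dense2 by blast
    have "\<forall>\<^sub>F \<tau> in at_right 0. ereal c < G \<tau>"
    proof (rule ccontr)
      assume "\<not> ?thesis"
      hence "\<forall>b>0. \<exists>\<tau>>0. \<tau> < b \<and> G \<tau> \<le> ereal c" unfolding eventually_at_right_field
        by (auto simp: not_less) (metis not_less)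
      hence ex: "\<exists>\<tau>>0. \<tau> < b \<and> G \<tau> \<le> ereal c" if "b > 0" for b using that by blast
      have "\<forall>n. \<exists>\<tau>. 0 < \<tau> \<and> \<tau> < min (1/real (Suc n)) \<tau>0 \<and> G \<tau> \<le> ereal c"
      proof
        fix n
        have "0 < min (1/real (Suc n)) \<tau>0" using \<tau>00 by simp
        thus "\<exists>\<tau>. 0 < \<tau> \<and> \<tau> < min (1/real (Suc n)) \<tau>0 \<and> G \<tau> \<le> ereal c" using ex by blast
      qed
      then obtain T where T: "\<And>n. 0 < T n" "\<And>n. T n < min (1/real (Suc n)) \<tau>0" "\<And>n. G (T n) \<le> ereal c"
        by (metis choice)
      define V where "V n = u\<tau> (T n)" for n
      define e where "e n = \<epsilon> (T n)" for n
      have ep: "0 < e n" for n using eps_pos T(1) by (simp add: e_def)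
      have VS: "V n \<in> S" for n using u\<tau>S T(1) by (simp add: V_def)
      have per: "\<exists>x. fst x \<in> S \<and> 0 \<le> snd x \<and> local_slope S d (\<phi>\<epsilon> (e n)) (fst x) \<le> ereal (snd x) \<and>
                 (d (fst x) (V n))\<^sup>2 \<le> 4 * T n * MM \<and> (snd x)\<^sup>2/2 * (\<theta> n)\<^sup>2 \<le> c" for n
      proof -
        interpret cc: core S d \<sigma> "\<phi>\<epsilon> (e n)" A B ustar by (rule cn[OF ep])
        have fv: "\<phi>\<epsilon> (e n) (V n) \<le> ereal C0" using C0[OF T(1)[of n]] by (simp add: V_def e_def)
        have dVu: "d (V n) u \<le> C0" using C0[OF T(1)[of n]] by (simp add: V_def)
        have Rb: "d (V n) ustar \<le> R" using M.triangle[OF VS[of n] uS AB(3)] dVu unfolding R_def by linarith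
        have tb: "8*B*T n \<le> 1"
        proof -
          have "T n < 1/(8*B)" using T(2)[of n] by (simp add: \<tau>0_def)
          thus ?thesis using AB by (simp add: field_simps)
        qed
        have "\<forall>\<^sub>F K in sequentially. (\<theta> n)^K < 1 - \<theta> n"
          using LIMSEQ_power_zero[of "\<theta> n"] \<theta>p[of n] by (intro order_tendstoD) auto
        then obtain K0 where K0: "\<And>K. K \<ge> K0 \<Longrightarrow> (\<theta> n)^K < 1 - \<theta> n" unfolding eventually_sequentially by blast
        have K: "(\<theta> n)^(Suc K0) \<le> 1 - \<theta> n" using K0[of "Suc K0"] by simp
        obtain w \<rho> y0 fv' where w: "w\<in>S" and fv': "\<phi>\<epsilon> (e n) (V n) = ereal fv'"
          and y0: "yosida S d (T n) (\<phi>\<epsilon> (e n)) (V n) = ereal y0" and \<rho>0: "0 \<le> \<rho>"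
          and lsw: "local_slope S d (\<phi>\<epsilon> (e n)) w \<le> ereal \<rho>" and dw: "(d w (V n))\<^sup>2 \<le> 4*T n*MM"
          and est: "\<rho>\<^sup>2/2 * (T n*(\<theta> n)\<^sup>2) \<le> fv' - y0"
          using cc.core_est[OF VS fv Rb T(1) tb \<theta>p K] unfolding MM_def by blast
        have "G (T n) = ereal ((fv' - y0)/T n)" unfolding G_def using fv' y0 T(1)[of n] by (simp add: V_def e_def)
        hence "(fv' - y0)/T n \<le> c" using T(3)[of n] by simp
        hence "fv' - y0 \<le> c * T n" using T(1)[of n] by (simp add: divide_le_eq)
        hence "(\<rho>\<^sup>2/2 * (\<theta> n)\<^sup>2) * T n \<le> c * T n" using est by (simp add: algebra_simps)
        hence "\<rho>\<^sup>2/2 * (\<theta> n)\<^sup>2 \<le> c" using T(1)[of n] by simp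
        thus ?thesis using w \<rho>0 lsw dw by (intro exI[of _ "(w, \<rho>)"]) auto
      qed
      then obtain g where g: "\<And>n. fst (g n) \<in> S \<and> 0 \<le> snd (g n) \<and> local_slope S d (\<phi>\<epsilon> (e n)) (fst (g n)) \<le> ereal (snd (g n)) \<and>
                 (d (fst (g n)) (V n))\<^sup>2 \<le> 4 * T n * MM \<and> (snd (g n))\<^sup>2/2 * (\<theta> n)\<^sup>2 \<le> c" by metis
      define W where "W n = fst (g n)" for n
      define P where "P n = snd (g n)" for n
      have WS: "W n \<in> S" and P0: "0 \<le> P n" and lsW: "local_slope S d (\<phi>\<epsilon> (e n)) (W n) \<le> ereal (P n)"
        and dW: "(d (W n) (V n))\<^sup>2 \<le> 4 * T n * MM" and Pc: "(P n)\<^sup>2/2 * (\<theta> n)\<^sup>2 \<le> c" for n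
        using g[of n] by (auto simp: W_def P_def)
      have c0: "0 \<le> c"
      proof -
        have "0 \<le> (P 0)\<^sup>2/2 * (\<theta> 0)\<^sup>2" by simp
        thus ?thesis using Pc[of 0] by linarith
      qed
      have Pb: "P n \<le> sqrt (2*c) / \<theta> n" for n
      proof -
        have "(P n * \<theta> n)\<^sup>2 \<le> 2*c" using Pc[of n] by (simp add: power_mult_distrib)
        hence "P n * \<theta> n \<le> sqrt (2*c)" using P0[of n] \<theta>p[of n] by (simp add: real_le_rsqrt)
        thus ?thesis using \<theta>p[of n] by (simp add: le_divide_eq)
      qed
      have Tl: "T \<longlonglongrightarrow> 0"
      proof (rule tendsto_sandwich[of "\<lambda>_. 0" _ _ "\<lambda>n. inverse (real (Suc n))"])
        show "\<forall>\<^sub>F n in sequentially. 0 \<le> T n" by (intro always_eventually allI less_imp_le T(1))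
        show "\<forall>\<^sub>F n in sequentially. T n \<le> inverse (real (Suc n))"
        proof (intro always_eventually allI)
          fix n show "T n \<le> inverse (real (Suc n))" using T(2)[of n] by (simp add: inverse_eq_divide)
        qed
        show "(\<lambda>n. inverse (real (Suc n))) \<longlonglongrightarrow> 0" by (rule LIMSEQ_inverse_real_of_nat)
      qed simp
      have Tf: "filterlim T (at_right 0) sequentially"
        unfolding filterlim_at using Tl T(1) by (auto intro!: always_eventually simp: less_imp_neq[symmetric])
      have el: "e \<longlonglongrightarrow> 0" unfolding e_def using filterlim_compose[OF eps_lim Tf] .
      have Vl: "limitin \<sigma> V u sequentially" unfolding V_def by (rule limitin_comp[OF ul Tf])
      have dl: "(\<lambda>n. d (V n) (W n)) \<longlonglongrightarrow> 0"
      proof (rule tendsto_sandwich[of "\<lambda>_. 0" _ _ "\<lambda>n. sqrt (4 * T n * MM)"])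
        show "\<forall>\<^sub>F n in sequentially. 0 \<le> d (V n) (W n)" by simp
        show "\<forall>\<^sub>F n in sequentially. d (V n) (W n) \<le> sqrt (4 * T n * MM)"
          using dW M.commute by (auto simp: real_le_rsqrt)
        have "(\<lambda>n. sqrt (4 * T n * MM)) \<longlonglongrightarrow> sqrt (4 * 0 * MM)" by (intro tendsto_intros Tl)
        thus "(\<lambda>n. sqrt (4 * T n * MM)) \<longlonglongrightarrow> 0" by simp
      qed simp
      have c2: "\<forall>un vn u. range un \<subseteq> S \<and> range vn \<subseteq> S \<and> u \<in> S \<and>
         (\<lambda>n. d (un n) (vn n)) \<longlonglongrightarrow> 0 \<and> limitin \<sigma> un u sequentially \<longrightarrow>
         limitin \<sigma> vn u sequentially" using compat[unfolded compatible_def] by (rule conjunct2)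
      have Wl: "limitin \<sigma> W u sequentially"
        using c2[rule_format, of V W u] VS WS uS dl Vl by auto
      have "ls \<le> Liminf sequentially (\<lambda>n. local_slope S d (\<phi>\<epsilon> (e n)) (W n))"
        unfolding ls_def using slope[rule_format, of e W u] ep el WS uS Wl by auto
      also have "\<dots> \<le> Liminf sequentially (\<lambda>n. ereal (sqrt (2*c) / \<theta> n))"
      proof (intro Liminf_mono always_eventually allI)
        fix n
        have "ereal (P n) \<le> ereal (sqrt (2*c) / \<theta> n)" using Pb[of n] by simp
        thus "local_slope S d (\<phi>\<epsilon> (e n)) (W n) \<le> ereal (sqrt (2*c) / \<theta> n)" using lsW[of n] by (rule order_trans[rotated])
      qed
      also have "\<dots> = ereal (sqrt (2*c) / 1)"
        by (intro lim_imp_Liminf tendsto_ereal tendsto_intros \<theta>l) auto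
      finally have "ls \<le> ereal (sqrt (2*c))" by simp
      hence "ereal (1/2) * ls\<^sup>2 \<le> ereal c" using half_sq_le[OF ls0 _ c0] by blast
      thus False using cl by simp
    qed
    thus "\<forall>\<^sub>F \<tau> in at_right 0. y < G \<tau>" by eventually_elim (use yc in auto)
  qed
  have rel: "relaxed_slope S d \<sigma> \<phi> u \<le> ls"
  proof (cases "\<phi> u = \<infinity>")
    case True thus ?thesis by (simp add: ls_def local_slope_def)
  next
    case False
    then obtain a where a: "\<phi> u = ereal a" using phi_proper(1) uS by (cases "\<phi> u") auto
    have "(\<lambda>_. u) \<in> {un :: nat \<Rightarrow> 'a. range un \<subseteq> S \<and> limitin \<sigma> un u sequentially \<and>
                  (\<exists>C::real. \<forall>n. d (un n) u \<le> C \<and> \<phi> (un n) \<le> ereal C)}"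
      using uS top a by (auto intro!: exI[of _ "max 0 a"])
    hence "relaxed_slope S d \<sigma> \<phi> u \<le> Liminf sequentially (\<lambda>n. local_slope S d \<phi> ((\<lambda>_. u) n))"
      unfolding relaxed_slope_def by (rule INF_lower)
    thus ?thesis by (simp add: ls_def Liminf_const)
  qed
  have rel0: "0 \<le> relaxed_slope S d \<sigma> \<phi> u"
    unfolding relaxed_slope_def by (intro INF_greatest Liminf_bounded always_eventually allI lsnn)
  have "ereal (1/2) * (relaxed_slope S d \<sigma> \<phi> u)\<^sup>2 \<le> ereal (1/2) * ls\<^sup>2"
    by (intro ereal_mult_left_mono ereal_sq_mono rel0 rel) simp
  also note main
  finally show "Liminf (at_right 0)
             (\<lambda>\<tau>. (\<phi>\<epsilon> (\<epsilon> \<tau>) (u\<tau> \<tau>) - yosida S d \<tau> (\<phi>\<epsilon> (\<epsilon> \<tau>)) (u\<tau> \<tau>)) / ereal \<tau>)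
           \<ge> ereal (1/2) * (relaxed_slope S d \<sigma> \<phi> u)\<^sup>2" by (simp add: G_def[abs_def])
qed

end
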